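(* If $F$ is regular, i.e., $r''$ is bounded above on some interval $(1-\delta,1)$ with $\delta\in(0,1)$, then there exists $\alpha>1$ such that $r(v)r''(v)+r'(v)\le 1$ for every $v\in(0,1)$ with $\psi(v)\ge 1/\alpha$.
   Context: Let $F$ be a probability distribution on $[0,1]$ with support $[0,1]$ admitting a twice continuously differentiable density $f:(0,1)\to\mathbb{R}_{>0}$. Define the inverse hazard rate $r(v)=(1-F(v))/f(v)$ and the virtual valuation $\psi(v)=v-r(v)$ on $(0,1)$, and assume $\psi'(v)>0$ whenever $\psi(v)>0$. *)

theory Defs
  imports "HOL-Analysis.Analysis"
begin

definition cdf :: "(real \<Rightarrow> real) \<Rightarrow> real \<Rightarrow> real" where
  "cdf f v = integral {0..v} f"

definition ihr :: "(real \<Rightarrow> real) \<Rightarrow> real \<Rightarrow> real" where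
  "ihr f v = (1 - cdf f v) / f v"

definition virt_val :: "(real \<Rightarrow> real) \<Rightarrow> real \<Rightarrow> real" where
  "virt_val f v = v - ihr f v"

end

theory Submission
  imports Defs
begin

lemma cdf_deriv:
  fixes f :: "real \<Rightarrow> real"
  assumes integ: "f integrable_on {0..1}"
    and cont: "continuous (at v) f" and v: "v \<in> {0<..<1}"
  shows "(cdf f has_real_derivative f v) (at v)"
proof -
  have "((\<lambda>u. integral {0..u} f) has_vector_derivative f v) (at v within ({0..1} - {}))"
    by (rule integral_has_vector_derivative_continuous_at[OF integ])
       (use v cont continuous_at_imp_continuous_at_within in auto)
  moreover have "at v within ({0..1::real} - {}) = at v"
    using v by (intro at_within_interior) auto
  ultimately show ?thesis
    by (simp add: cdf_def[abs_def] has_real_derivative_iff_has_vector_derivative)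
qed

lemma cdf_le1:
  fixes f :: "real \<Rightarrow> real"
  assumes pos: "\<And>v. v \<in> {0<..<1} \<Longrightarrow> f v > 0"
    and integ: "f integrable_on {0..1}" and total: "integral {0..1} f = 1"
    and v: "v \<in> {0<..<1}"
  shows "cdf f v \<le> 1"
proof -
  have i2: "f integrable_on {v..1}"
    using integ v by (intro integrable_subinterval_real[OF integ]) auto
  have "integral {0..v} f + integral {v..1} f = integral {0..1} f"
    using Henstock_Kurzweil_Integration.integral_combine[of 0 v 1 f] v integ by auto
  moreover have "integral {v..1} f \<ge> 0"
  proof -
    have "integral {v..1} f = integral {v..1} (\<lambda>x. max 0 (f x))"
      by (rule integral_spike[of "{v,1}"]) (use v in \<open>auto simp: max_def intro!: less_imp_le pos\<close>)
    moreover have "(\<lambda>x. max 0 (f x)) integrable_on {v..1}"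
    proof -
      have "(\<lambda>x. max 0 (f x)) integrable_on {v..1} \<longleftrightarrow> f integrable_on {v..1}"
        by (rule integrable_spike_finite_eq[of "{v,1}"]) (use v in \<open>auto simp: max_def intro!: less_imp_le pos\<close>)
      with i2 show ?thesis by simp
    qed
    ultimately show ?thesis by (simp add: integral_nonneg)
  qed
  ultimately show ?thesis using total by (simp add: cdf_def)
qed

lemma quad_deriv: "(r has_real_derivative d) (at x) \<Longrightarrow> DERIV (\<lambda>x. r x - c * x - M0 * (w - x)^2 / 2) x :> d - c + M0 * (w - x)"
  by (auto intro!: derivative_eq_intros simp: algebra_simps) (simp add: divide_simps algebra_simps)

theorem lemma7:
  fixes f f' f'' :: "real \<Rightarrow> real"
  assumes pos: "\<And>v. v \<in> {0<..<1} \<Longrightarrow> f v > 0"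
    and d1: "\<And>v. v \<in> {0<..<1} \<Longrightarrow> (f has_real_derivative f' v) (at v)"
    and d2: "\<And>v. v \<in> {0<..<1} \<Longrightarrow> (f' has_real_derivative f'' v) (at v)"
    and c2: "continuous_on {0<..<1} f''"
    and integrable: "f integrable_on {0..1}"
    and total: "integral {0..1} f = 1"
    and mono_psi: "\<And>v. v \<in> {0<..<1} \<Longrightarrow> virt_val f v > 0 \<Longrightarrow> deriv (virt_val f) v > 0"
    and regular: "\<exists>\<delta> M. 0 < \<delta> \<and> \<delta> < 1 \<and>
        (\<forall>v \<in> {1 - \<delta><..<1}. deriv (deriv (ihr f)) v \<le> M)"
  shows "\<exists>\<alpha>::real. \<alpha> > 1 \<and> (\<forall>v \<in> {0<..<1}. virt_val f v \<ge> 1 / \<alpha> \<longrightarrow>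
           ihr f v * deriv (deriv (ihr f)) v + deriv (ihr f) v \<le> 1)"
proof -
  define r where "r = ihr f"
  define r1 where "r1 = deriv r"
  define r2 where "r2 = deriv r1"
  define E where "E = (\<lambda>x. (- f x * f x - (1 - cdf f x) * f' x) / (f x * f x))"
  have cdfd: "(cdf f has_real_derivative f x) (at x)" if x: "x \<in> {0<..<1}" for x
    using cdf_deriv[OF integrable _ x] DERIV_isCont[OF d1[OF x]] by blast
  have rd: "(r has_real_derivative E x) (at x)" if x: "x \<in> {0<..<1}" for x
  proof -
    have "((\<lambda>x. (1 - cdf f x) / f x) has_real_derivative E x) (at x)"
      using DERIV_divide[OF DERIV_diff[OF DERIV_const cdfd[OF x]] d1[OF x]] pos[OF x]
      by (simp add: E_def)
    moreover have "r = (\<lambda>x. (1 - cdf f x) / f x)"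
      by (simp add: r_def ihr_def[abs_def])
    ultimately show ?thesis by simp
  qed
  have R1: "(r has_real_derivative r1 x) (at x)" if x: "x \<in> {0<..<1}" for x
    using rd[OF x] DERIV_imp_deriv[OF rd[OF x]] by (simp add: r1_def)
  have R2: "(r1 has_real_derivative r2 x) (at x)" if x: "x \<in> {0<..<1}" for x
  proof -
    have "\<exists>D. (E has_real_derivative D) (at x)"
      unfolding E_def
      by (rule exI, rule DERIV_divide[OF DERIV_diff[OF DERIV_mult[OF DERIV_minus[OF d1[OF x]] d1[OF x]]
            DERIV_mult[OF DERIV_diff[OF DERIV_const cdfd[OF x]] d2[OF x]]] DERIV_mult[OF d1[OF x] d1[OF x]]])
        (use pos[OF x] in simp)
    then obtain D where D: "(E has_real_derivative D) (at x)" by blast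
    have "(r1 has_real_derivative D) (at x)"
    proof (rule has_field_derivative_transform_within_open[OF D, of "{0<..<1}"])
      show "E y = r1 y" if "y \<in> {0<..<1}" for y
        using DERIV_imp_deriv[OF rd[OF that]] by (simp add: r1_def)
    qed (use x in auto)
    then show ?thesis by (metis DERIV_imp_deriv r2_def)
  qed
  have Rnn: "r x \<ge> 0" if x: "x \<in> {0<..<1}" for x
    using cdf_le1[OF pos integrable total x] pos[OF x] by (simp add: r_def ihr_def)
  obtain \<delta> M where dM: "0 < \<delta>" "\<delta> < 1" "\<forall>v \<in> {1 - \<delta><..<1}. r2 v \<le> M"
    using regular unfolding r2_def r1_def r_def by blast
  define M0 where "M0 = max M 1"
  have M0: "M0 \<ge> 1" "M0 \<ge> M" by (auto simp: M0_def)
  have R2M: "r2 x \<le> M0" if "1 - \<delta> < x" "x < 1" for x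
    using dM(3) that M0 by force
  define L where "L = min (\<delta>/2) (1/(2*M0))"
  have L: "L > 0" "L \<le> \<delta>/2" "M0 * L \<le> 1/2"
    using dM M0 by (auto simp: L_def min_def field_simps)
  define \<epsilon> where "\<epsilon> = min (\<delta>/2) (min (L/4) (1/(4*M0)))"
  have eps: "\<epsilon> > 0" "\<epsilon> \<le> \<delta>/2" "\<epsilon> \<le> L/4" "\<epsilon> * M0 \<le> 1/4" "\<epsilon> < 1"
    using dM M0 L by (auto simp: \<epsilon>_def min_def field_simps)
  define \<alpha> where "\<alpha> = 1 / (1 - \<epsilon>)"
  have a1: "\<alpha> > 1" using eps by (simp add: \<alpha>_def field_simps)
  have ia: "1 / \<alpha> = 1 - \<epsilon>" using eps by (simp add: \<alpha>_def)
  have main: "r w * r2 w + r1 w \<le> 1" if w: "w \<in> {0<..<1}" and psi: "virt_val f w \<ge> 1 - \<epsilon>" for w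
  proof -
    have rw: "r w < \<epsilon>" "w \<ge> 1 - \<epsilon>" using psi Rnn[OF w] w
      by (auto simp: virt_val_def r_def)
    have rw0: "r w \<ge> 0" using Rnn[OF w] .
    define c where "c = r1 w"
    define v where "v = w - L"
    have v: "1 - \<delta> < v" "v < w" "v > 0" using rw eps L dM by (auto simp: v_def)
    have inI: "x \<in> {0<..<1}" "1 - \<delta> < x" if "v \<le> x" "x \<le> w" for x
      using that v w by auto
    have step1: "r1 s \<ge> c - M0 * (w - s)" if s: "v \<le> s" "s \<le> w" for s
    proof -
      have "(\<lambda>x. r1 x - M0 * x) w \<le> (\<lambda>x. r1 x - M0 * x) s"
      proof (rule DERIV_nonpos_imp_nonincreasing[OF s(2)])
        fix x assume "s \<le> x" "x \<le> w"
        then have "v \<le> x" "x \<le> w" using s by auto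
        then show "\<exists>y. DERIV (\<lambda>x. r1 x - M0 * x) x :> y \<and> y \<le> 0"
          using inI R2 R2M w
          by (intro exI[of _ "r2 x - M0"]) (auto intro!: derivative_eq_intros)
      qed
      then show ?thesis by (simp add: c_def algebra_simps)
    qed
    have step2: "(\<lambda>x. r x - c * x - M0 * (w - x)^2 / 2) v \<le> (\<lambda>x. r x - c * x - M0 * (w - x)^2 / 2) w"
    proof (rule DERIV_nonneg_imp_nondecreasing[OF less_imp_le[OF v(2)]])
      fix x assume x: "v \<le> x" "x \<le> w"
      have "DERIV (\<lambda>x. r x - c * x - M0 * (w - x)^2 / 2) x :> r1 x - c + M0 * (w - x)"
        by (rule quad_deriv[OF R1[OF inI(1)[OF x]]])
      moreover have "r1 x - c + M0 * (w - x) \<ge> 0" using step1[OF x] by simp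
      ultimately show "\<exists>y. DERIV (\<lambda>x. r x - c * x - M0 * (w - x)^2 / 2) x :> y \<and> y \<ge> 0"
        by blast
    qed
    have rv: "r v \<ge> 0" using Rnn inI(1)[of v] v by auto
    have "c * L \<le> r w + M0 * L^2 / 2"
      using step2 rv by (simp add: v_def algebra_simps)
    also have "\<dots> \<le> L/4 + L/4"
    proof -
      have "M0 * L^2 / 2 = (M0 * L) * L / 2" by (simp add: power2_eq_square)
      also have "\<dots> \<le> (1/2) * L / 2" using L by (intro divide_right_mono mult_right_mono) auto
      finally show ?thesis using rw eps by linarith
    qed
    finally have "c * L \<le> (1/2) * L" by simp
    then have c: "c \<le> 1/2" using L by simp
    have "r w * r2 w \<le> r w * M0"
      using rw0 R2M[of w] rw eps w by (intro mult_left_mono) auto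
    also have "\<dots> \<le> \<epsilon> * M0" using rw M0 by (intro mult_right_mono) auto
    finally have "r w * r2 w \<le> 1/4" using eps by linarith
    then show ?thesis using c by (simp add: c_def)
  qed
  show ?thesis
  proof (intro exI[of _ \<alpha>] conjI ballI impI)
    show "\<alpha> > 1" by (rule a1)
  next
    fix v :: real assume v: "v \<in> {0<..<1}" and p: "1 / \<alpha> \<le> virt_val f v"
    have "r v * r2 v + r1 v \<le> 1" using main[OF v] p ia by simp
    then show "ihr f v * deriv (deriv (ihr f)) v + deriv (ihr f) v \<le> 1"
      by (simp add: r_def r1_def r2_def)
  qed
qed

end
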